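(* Let $M$ be a finite rectangular monoid, $k$ a field, and $e\in E(M)$. Then $(emene,emne)\in\mathrm{rad}^2(M)$ for all $m,n\in M$. In particular, if $B$ is a finite band, then $B/\mathrm{rad}^2(B)$ is a regular band.
   Context: $E(M)$ is the set of idempotents; $M$ is rectangular if each set $\{f\in E(M): MfM=MeM\}$ is closed under multiplication. $\mathrm{rad}^2(M)$ is the congruence on $M$ given by $(m,n)\in\mathrm{rad}^2(M)$ iff $m-n\in\mathrm{rad}(kM)^2$, where $\mathrm{rad}$ is the Jacobson radical. A band is a monoid in which every element is idempotent (bands are rectangular); a regular band is a band satisfying $xyxzx=xyzx$ for all $x,y,z$. *)

theory Defs
  imports Main
begin

text \<open>The monoid algebra kM of a finite monoid M over a field k is modelled as the
  functions M \<Rightarrow> k with convolution product.\<close>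

definition idempotents :: "'m::monoid_mult set" where
  "idempotents = {e. e * e = e}"

definition two_sided :: "'m::monoid_mult \<Rightarrow> 'm set" where
  "two_sided e = {a * e * b | a b. True}"

definition rectangular :: "'m::monoid_mult itself \<Rightarrow> bool" where
  "rectangular _ \<longleftrightarrow>
     (\<forall>e \<in> (idempotents :: 'm set). \<forall>f \<in> idempotents. \<forall>g \<in> idempotents.
        two_sided f = two_sided e \<and> two_sided g = two_sided e \<longrightarrow>
        f * g \<in> idempotents \<and> two_sided (f * g) = two_sided e)"

definition band :: "'m::monoid_mult itself \<Rightarrow> bool" where
  "band _ \<longleftrightarrow> (\<forall>x :: 'm. x * x = x)"

definition delta :: "'m \<Rightarrow> 'm \<Rightarrow> 'k::field" where
  "delta m = (\<lambda>x. if x = m then 1 else 0)"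

definition conv :: "('m::monoid_mult \<Rightarrow> 'k::field) \<Rightarrow> ('m \<Rightarrow> 'k) \<Rightarrow> ('m \<Rightarrow> 'k)" where
  "conv f g = (\<lambda>m. \<Sum>p \<in> {p. fst p * snd p = m}. f (fst p) * g (snd p))"

definition left_ideal :: "('m::monoid_mult \<Rightarrow> 'k::field) set \<Rightarrow> bool" where
  "left_ideal I \<longleftrightarrow> (\<lambda>_. 0) \<in> I \<and>
     (\<forall>x\<in>I. \<forall>y\<in>I. (\<lambda>t. x t + y t) \<in> I) \<and>
     (\<forall>x\<in>I. (\<lambda>t. - x t) \<in> I) \<and>
     (\<forall>a. \<forall>x\<in>I. conv a x \<in> I)"

definition maximal_left_ideal :: "('m::monoid_mult \<Rightarrow> 'k::field) set \<Rightarrow> bool" where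
  "maximal_left_ideal I \<longleftrightarrow> left_ideal I \<and> I \<noteq> UNIV \<and>
     (\<forall>J. left_ideal J \<and> I \<subseteq> J \<and> J \<noteq> UNIV \<longrightarrow> J = I)"

definition jrad :: "('m::monoid_mult \<Rightarrow> 'k::field) set" where
  "jrad = \<Inter> {I. maximal_left_ideal I}"

inductive_set rad_sq :: "('m::monoid_mult \<Rightarrow> 'k::field) set" where
  zero: "(\<lambda>_. 0) \<in> rad_sq"
| prod: "x \<in> jrad \<Longrightarrow> y \<in> jrad \<Longrightarrow> conv x y \<in> rad_sq"
| add: "a \<in> rad_sq \<Longrightarrow> b \<in> rad_sq \<Longrightarrow> (\<lambda>t. a t + b t) \<in> rad_sq"

definition rad2 :: "'k::field itself \<Rightarrow> ('m::monoid_mult \<times> 'm) set" where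
  "rad2 _ = {(m, n). (\<lambda>t. (delta m t :: 'k) - delta n t) \<in> (rad_sq :: ('m \<Rightarrow> 'k) set)}"

end

theory Submission
  imports Defs
begin


lemma ts_mem: "a * x * b \<in> two_sided x"
  unfolding two_sided_def by blast

lemma ts_trans: assumes "y \<in> two_sided x" shows "two_sided y \<subseteq> two_sided x"
proof
  fix z assume "z \<in> two_sided y"
  then obtain a b where z: "z = a*y*b" by (auto simp: two_sided_def)
  from assms obtain c d where y: "y = c*x*d" by (auto simp: two_sided_def)
  have "z = (a*c)*x*(d*b)" by (simp add: z y mult.assoc)
  thus "z \<in> two_sided x" by (simp add: ts_mem)
qed

lemma ts_left: "two_sided (x*y) \<subseteq> two_sided y"
  by (rule ts_trans) (metis ts_mem mult_1_right)

lemma ts_right: "two_sided (x*y) \<subseteq> two_sided x"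
  by (rule ts_trans) (metis ts_mem mult_1_left)

lemma idem_pow:
  fixes a :: "'m::{monoid_mult,finite}"
  shows "\<exists>n>0. a^n * a^n = a^n"
proof -
  obtain i j where ij: "i < j" "a^i = a^j"
  proof -
    have "\<not> inj (\<lambda>n::nat. a^n)"
    proof
      assume "inj (\<lambda>n::nat. a^n)"
      hence "finite (UNIV::nat set)"
        using finite_imageD[of "\<lambda>n::nat. a^n" UNIV] by simp
      thus False by simp
    qed
    then obtain i j where "i \<noteq> j" "a^i = a^j" unfolding inj_def by blast
    thus ?thesis using that by (metis linorder_neqE_nat)
  qed
  define p where "p = j - i"
  have p: "p > 0" "i + p = j" using ij by (auto simp: p_def)
  have step: "a^(k+p) = a^k" if "k \<ge> i" for k
  proof -
    have "a^(k+p) = a^(k-i) * a^(i+p)"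
      by (metis that add.assoc le_add_diff_inverse2 power_add)
    also have "\<dots> = a^(k-i) * a^i" using p ij by simp
    also have "\<dots> = a^k" using that by (metis le_add_diff_inverse2 power_add)
    finally show ?thesis .
  qed
  have per: "a^(k + t*p) = a^k" if "k \<ge> i" for k t
  proof (induction t)
    case 0 then show ?case by simp
  next
    case (Suc t)
    have "a^(k + Suc t * p) = a^((k + t*p) + p)" by (simp add: algebra_simps)
    also have "\<dots> = a^(k+t*p)" using step[of "k+t*p"] that by simp
    finally show ?case using Suc by simp
  qed
  define n where "n = (i+1)*p"
  have "(i+1)*1 \<le> (i+1)*p" using p by (intro mult_le_mono2) simp
  hence "n \<ge> i" "n > 0" using p by (auto simp: n_def)
  have "a^n * a^n = a^(n + (i+1)*p)" by (simp add: power_add n_def)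
  also have "\<dots> = a^n" using per[of n "i+1"] \<open>n \<ge> i\<close> by simp
  finally show ?thesis using \<open>n > 0\<close> by blast
qed

lemma pow_sandwich:
  fixes y :: "'m::monoid_mult"
  assumes "y = a*y*b" shows "y = a^n * y * b^n"
proof (induction n)
  case 0 then show ?case by simp
next
  case (Suc n)
  have "a^Suc n * y * b^Suc n = a^n * (a*y*b) * b^n"
    by (simp only: power_Suc2[of a] power_Suc[of b] mult.assoc)
  also have "\<dots> = y" using assms Suc by simp
  finally show ?case by simp
qed

lemma stab_R:
  fixes y :: "'m::{monoid_mult,finite}"
  assumes "two_sided (y*z) = two_sided y" shows "\<exists>w. y = y*z*w"
proof -
  have "y \<in> two_sided (y*z)" using assms ts_mem[of 1 y 1] by simp
  then obtain a b where "y = a*(y*z)*b" by (auto simp: two_sided_def)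
  hence y1: "y = a*y*(z*b)" by (simp add: mult.assoc)
  obtain n where n: "n > 0" "(z*b)^n * (z*b)^n = (z*b)^n" using idem_pow by blast
  have y2: "y = a^n * y * (z*b)^n" using pow_sandwich[OF y1] .
  have "y * (z*b)^n = a^n * y * ((z*b)^n * (z*b)^n)"
    by (subst (1) y2) (simp add: mult.assoc)
  also have "\<dots> = y" using n y2 by simp
  finally have y3: "y = y * (z*b)^n" by simp
  obtain m where "n = Suc m" using n by (cases n) auto
  hence "y = y*z*(b*(z*b)^m)" using y3 by (simp add: power_Suc mult.assoc)
  thus ?thesis by blast
qed

lemma stab_L:
  fixes y :: "'m::{monoid_mult,finite}"
  assumes "two_sided (z*y) = two_sided y" shows "\<exists>w. y = w*z*y"
proof -
  have "y \<in> two_sided (z*y)" using assms ts_mem[of 1 y 1] by simp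
  then obtain a b where "y = a*(z*y)*b" by (auto simp: two_sided_def)
  hence y1: "y = (a*z)*y*b" by (simp add: mult.assoc)
  obtain n where n: "n > 0" "(a*z)^n * (a*z)^n = (a*z)^n" using idem_pow by blast
  have y2: "y = (a*z)^n * y * b^n" using pow_sandwich[OF y1] .
  have "(a*z)^n * y = ((a*z)^n * (a*z)^n) * y * b^n"
    by (subst (1) y2) (simp add: mult.assoc)
  also have "\<dots> = y" using n y2 by simp
  finally have y3: "y = (a*z)^n * y" by simp
  obtain m where "n = Suc m" using n by (cases n) auto
  hence "y = ((a*z)^m*a)*z*y" using y3 by (simp only: power_Suc2 mult.assoc)
  thus ?thesis by blast
qed

lemma reg_elt:
  fixes c :: "'m::{monoid_mult,finite}"
  assumes eps: "\<epsilon>*\<epsilon> = \<epsilon>" and J: "two_sided c = two_sided \<epsilon>"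
  shows "\<exists>z. c*z*c = c"
proof -
  have "\<epsilon> \<in> two_sided c" using J ts_mem[of 1 \<epsilon> 1] by simp
  then obtain a b where ab: "\<epsilon> = a*c*b" by (auto simp: two_sided_def)
  define a1 where "a1 = \<epsilon>*a"
  define b1 where "b1 = b*\<epsilon>"
  have e1: "\<epsilon> = a1*c*b1"
  proof -
    have "\<epsilon> = \<epsilon>*\<epsilon>*\<epsilon>" using eps by simp
    also have "\<dots> = \<epsilon>*(a*c*b)*\<epsilon>" using ab eps by simp
    finally show ?thesis by (simp add: a1_def b1_def mult.assoc)
  qed
  define \<iota> where "\<iota> = b1*a1*c"
  have b1e: "b1*\<epsilon> = b1" using eps by (simp add: b1_def mult.assoc)
  have "\<epsilon> = a1*(c*\<iota>)*b1"
  proof -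
    have "\<epsilon> = \<epsilon>*\<epsilon>" using eps by simp
    also have "\<dots> = (a1*c*b1)*(a1*c*b1)" using e1 by simp
    finally show ?thesis by (simp add: \<iota>_def mult.assoc)
  qed
  hence "\<epsilon> \<in> two_sided (c*\<iota>)" by (metis ts_mem)
  hence "two_sided \<epsilon> \<subseteq> two_sided \<iota>" using ts_trans ts_left by blast
  moreover have "two_sided \<iota> \<subseteq> two_sided c" unfolding \<iota>_def by (rule ts_left)
  ultimately have "two_sided ((b1*a1)*c) = two_sided c" using J by (simp add: \<iota>_def)
  then obtain w where w: "c = w*(b1*a1)*c" using stab_L by blast
  have ii: "\<iota>*\<iota> = \<iota>"
  proof -
    have "\<iota>*\<iota> = b1*(a1*c*b1)*a1*c" by (simp add: \<iota>_def mult.assoc)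
    also have "\<dots> = \<iota>" using e1[symmetric] b1e by (simp add: \<iota>_def mult.assoc)
    finally show ?thesis .
  qed
  have "c*\<iota> = w*(\<iota>*\<iota>)" using w by (metis \<iota>_def mult.assoc)
  also have "\<dots> = c" using ii w by (simp add: \<iota>_def mult.assoc)
  finally have "c*(b1*a1)*c = c" by (simp add: \<iota>_def mult.assoc)
  thus ?thesis by blast
qed


lemma rectD:
  fixes e f g :: "'m::monoid_mult"
  assumes "rectangular TYPE('m)" "e*e=e" "f*f=f" "g*g=g"
    "two_sided f = two_sided e" "two_sided g = two_sided e"
  shows "(f*g)*(f*g) = f*g \<and> two_sided (f*g) = two_sided e"
  using assms unfolding rectangular_def idempotents_def by blast

lemma rb_aba:
  fixes a b \<epsilon> :: "'m::{monoid_mult,finite}"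
  assumes rect: "rectangular TYPE('m)" and eps: "\<epsilon>*\<epsilon>=\<epsilon>"
    and a: "a*a=a" "two_sided a = two_sided \<epsilon>"
    and b: "b*b=b" "two_sided b = two_sided \<epsilon>"
  shows "a*b*a = a"
proof -
  have ab: "(a*b)*(a*b) = a*b" "two_sided (a*b) = two_sided \<epsilon>"
    using rectD[OF rect eps a(1) b(1) a(2) b(2)] by auto
  have aba: "(a*b*a)*(a*b*a) = a*b*a" "two_sided (a*b*a) = two_sided \<epsilon>"
    using rectD[OF rect eps ab(1) a(1) ab(2) a(2)] by auto
  have "two_sided ((a*b)*a) = two_sided a" using aba a by simp
  then obtain w where w: "a = w*(a*b)*a" using stab_L by blast
  have "a*(a*b*a) = w*((a*b*a)*(a*b*a))" using w by (metis mult.assoc)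
  also have "\<dots> = a" using aba w by (simp add: mult.assoc)
  finally have 1: "a*(a*b*a) = a" .
  have "a*(a*b*a) = a*b*a" using a by (metis mult.assoc)
  thus ?thesis using 1 by simp
qed

lemma rb_abc:
  fixes a b c \<epsilon> :: "'m::{monoid_mult,finite}"
  assumes rect: "rectangular TYPE('m)" and eps: "\<epsilon>*\<epsilon>=\<epsilon>"
    and a: "a*a=a" "two_sided a = two_sided \<epsilon>"
    and b: "b*b=b" "two_sided b = two_sided \<epsilon>"
    and c: "c*c=c" "two_sided c = two_sided \<epsilon>"
  shows "a*b*c = a*c"
proof -
  have ab: "(a*b)*(a*b) = a*b" "two_sided (a*b) = two_sided \<epsilon>"
    using rectD[OF rect eps a(1) b(1) a(2) b(2)] by auto
  have abc: "(a*b*c)*(a*b*c) = a*b*c" "two_sided (a*b*c) = two_sided \<epsilon>"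
    using rectD[OF rect eps ab(1) c(1) ab(2) c(2)] by auto
  have abca: "(a*b*c*a)*(a*b*c*a) = a*b*c*a" "two_sided (a*b*c*a) = two_sided \<epsilon>"
    using rectD[OF rect eps abc(1) a(1) abc(2) a(2)] by auto
  have ac: "(a*c)*(a*c) = a*c" "two_sided (a*c) = two_sided \<epsilon>"
    using rectD[OF rect eps a(1) c(1) a(2) c(2)] by auto
  have 1: "(a*c)*(a*b*c*a)*(a*c) = a*c"
    using rb_aba[OF rect eps ac abca] .
  have aca: "a*c*a = a" using rb_aba[OF rect eps a c] .
  have cac: "c*a*c = c" using rb_aba[OF rect eps c a] .
  have "(a*c)*(a*b*c*a)*(a*c) = (a*c*a)*b*(c*(a*a)*c)" by (simp add: mult.assoc)
  also have "\<dots> = a*b*c" using aca cac a by (simp add: mult.assoc)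
  finally show ?thesis using 1 by simp
qed

lemma idem_right:
  fixes x \<epsilon> :: "'m::{monoid_mult,finite}"
  assumes eps: "\<epsilon>*\<epsilon>=\<epsilon>" and x: "two_sided x = two_sided \<epsilon>"
  shows "\<exists>\<iota>. \<iota>*\<iota> = \<iota> \<and> two_sided \<iota> = two_sided \<epsilon> \<and> x*\<iota> = x"
proof -
  obtain z where z: "x*z*x = x" using reg_elt[OF eps x] by blast
  have "(z*x)*(z*x) = z*x" using z by (metis mult.assoc)
  moreover have "two_sided (z*x) \<subseteq> two_sided x" by (rule ts_left)
  moreover have "x*(z*x) = x" using z by (simp add: mult.assoc)
  moreover hence "two_sided x \<subseteq> two_sided (z*x)" using ts_left[of x "z*x"] by simp
  ultimately show ?thesis using x by blast
qed

lemma idem_left: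
  fixes x \<epsilon> :: "'m::{monoid_mult,finite}"
  assumes eps: "\<epsilon>*\<epsilon>=\<epsilon>" and x: "two_sided x = two_sided \<epsilon>"
  shows "\<exists>\<iota>. \<iota>*\<iota> = \<iota> \<and> two_sided \<iota> = two_sided \<epsilon> \<and> \<iota>*x = x"
proof -
  obtain z where z: "x*z*x = x" using reg_elt[OF eps x] by blast
  have "(x*z)*(x*z) = x*z" using z by (metis mult.assoc)
  moreover have "two_sided (x*z) \<subseteq> two_sided x" by (rule ts_right)
  moreover have "(x*z)*x = x" using z by (simp add: mult.assoc)
  moreover hence "two_sided x \<subseteq> two_sided (x*z)" using ts_right[of "x*z" x] by simp
  ultimately show ?thesis using x by blast
qed

lemma transp:
  fixes x x' w \<epsilon> :: "'m::{monoid_mult,finite}"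
  assumes rect: "rectangular TYPE('m)" and eps: "\<epsilon>*\<epsilon>=\<epsilon>"
    and x: "two_sided x = two_sided \<epsilon>" and x': "two_sided x' = two_sided \<epsilon>"
    and w: "w*w=w" "two_sided w = two_sided \<epsilon>"
  shows "x*w*x' = x*x'"
proof -
  obtain i1 where i1: "i1*i1=i1" "two_sided i1 = two_sided \<epsilon>" "x*i1 = x"
    using idem_right[OF eps x] by blast
  obtain i2 where i2: "i2*i2=i2" "two_sided i2 = two_sided \<epsilon>" "i2*x' = x'"
    using idem_left[OF eps x'] by blast
  have "x*w*x' = (x*i1)*w*(i2*x')" using i1(3) i2(3) by simp
  also have "\<dots> = x*(i1*w*i2)*x'" by (simp add: mult.assoc)
  also have "\<dots> = x*(i1*i2)*x'" using rb_abc[OF rect eps i1(1,2) w i2(1,2)] by simp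
  also have "\<dots> = (x*i1)*(i2*x')" by (simp add: mult.assoc)
  also have "\<dots> = x*x'" using i1(3) i2(3) by simp
  finally show ?thesis .
qed

lemma close_r:
  fixes g w \<epsilon> :: "'m::{monoid_mult,finite}"
  assumes rect: "rectangular TYPE('m)" and eps: "\<epsilon>*\<epsilon>=\<epsilon>"
    and g: "two_sided g = two_sided \<epsilon>"
    and w: "w*w=w" "two_sided w = two_sided \<epsilon>"
  shows "two_sided (g*w) = two_sided \<epsilon>"
proof -
  obtain i where i: "i*i=i" "two_sided i = two_sided \<epsilon>" "g*i = g"
    using idem_right[OF eps g] by blast
  have "g = g*(i*w*i)" using rb_aba[OF rect eps i(1,2) w] i by simp
  also have "g*(i*w*i) = (g*i)*w*i" by (simp add: mult.assoc)
  finally have "g = (g*w)*i" using i(3) by simp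
  hence "two_sided g \<subseteq> two_sided (g*w)" by (metis ts_right)
  moreover have "two_sided (g*w) \<subseteq> two_sided g" by (rule ts_right)
  ultimately show ?thesis using g by blast
qed

lemma close_l:
  fixes h w \<epsilon> :: "'m::{monoid_mult,finite}"
  assumes rect: "rectangular TYPE('m)" and eps: "\<epsilon>*\<epsilon>=\<epsilon>"
    and h: "two_sided h = two_sided \<epsilon>"
    and w: "w*w=w" "two_sided w = two_sided \<epsilon>"
  shows "two_sided (w*h) = two_sided \<epsilon>"
proof -
  obtain i where i: "i*i=i" "two_sided i = two_sided \<epsilon>" "i*h = h"
    using idem_left[OF eps h] by blast
  have "h = (i*w*i)*h" using rb_aba[OF rect eps i(1,2) w] i by simp
  also have "(i*w*i)*h = i*w*(i*h)" by (simp add: mult.assoc)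
  finally have "h = i*(w*h)" using i(3) by (simp add: mult.assoc)
  hence "two_sided h \<subseteq> two_sided (w*h)" by (metis ts_left)
  moreover have "two_sided (w*h) \<subseteq> two_sided h" by (rule ts_left)
  ultimately show ?thesis using h by blast
qed

lemma w_exist_A:
  fixes c e \<epsilon> :: "'m::{monoid_mult,finite}"
  assumes eps: "\<epsilon>*\<epsilon>=\<epsilon>" and c: "two_sided c = two_sided \<epsilon>"
    and e: "e*e = e" and ce: "c*e = c"
  shows "\<exists>w. w*w = w \<and> two_sided w = two_sided \<epsilon> \<and> e*w = w"
proof -
  obtain z where z: "c*z*c = c" using reg_elt[OF eps c] by blast
  define u where "u = z*c"
  have uu: "u*u = u" using z by (simp add: u_def mult.assoc)
  have ue: "u*e = u" using ce by (simp add: u_def mult.assoc)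
  have "two_sided u \<subseteq> two_sided c" unfolding u_def by (rule ts_left)
  moreover have "c*u = c" using z by (simp add: u_def mult.assoc)
  hence "two_sided c \<subseteq> two_sided u" by (metis ts_left)
  ultimately have Ju: "two_sided u = two_sided \<epsilon>" using c by blast
  define w where "w = e*u"
  have "w*w = w" unfolding w_def by (metis ue uu mult.assoc)
  moreover have "e*w = w" unfolding w_def by (metis e mult.assoc)
  moreover have "two_sided w = two_sided \<epsilon>"
  proof -
    have "u = u*w" unfolding w_def by (metis ue uu mult.assoc)
    hence "two_sided u \<subseteq> two_sided w" by (metis ts_left)
    moreover have "two_sided w \<subseteq> two_sided u" unfolding w_def by (rule ts_left)
    ultimately show ?thesis using Ju by blast
  qed
  ultimately show ?thesis by blast
qed

lemma w_exist_B:
  fixes c e \<epsilon> :: "'m::{monoid_mult,finite}"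
  assumes eps: "\<epsilon>*\<epsilon>=\<epsilon>" and c: "two_sided c = two_sided \<epsilon>"
    and e: "e*e = e" and ec: "e*c = c"
  shows "\<exists>w. w*w = w \<and> two_sided w = two_sided \<epsilon> \<and> w*e = w"
proof -
  obtain z where z: "c*z*c = c" using reg_elt[OF eps c] by blast
  define u where "u = c*z"
  have uu: "u*u = u" unfolding u_def by (metis z mult.assoc)
  have eu: "e*u = u" using ec by (simp add: u_def flip: mult.assoc)
  have "two_sided u \<subseteq> two_sided c" unfolding u_def by (rule ts_right)
  moreover have "u*c = c" using z by (simp add: u_def mult.assoc)
  hence "two_sided c \<subseteq> two_sided u" by (metis ts_right)
  ultimately have Ju: "two_sided u = two_sided \<epsilon>" using c by blast
  define w where "w = u*e"
  have "w*w = w" unfolding w_def by (metis eu uu mult.assoc)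
  moreover have "w*e = w" using e by (simp add: w_def mult.assoc)
  moreover have "two_sided w = two_sided \<epsilon>"
  proof -
    have "u = w*u" unfolding w_def by (metis eu uu mult.assoc)
    hence "two_sided u \<subseteq> two_sided w" by (metis ts_right)
    moreover have "two_sided w \<subseteq> two_sided u" unfolding w_def by (rule ts_right)
    ultimately show ?thesis using Ju by blast
  qed
  ultimately show ?thesis by blast
qed

lemma reg_from_prod:
  fixes x y f :: "'m::{monoid_mult,finite}"
  assumes x: "two_sided x = two_sided f" and y: "two_sided y = two_sided f"
    and xy: "two_sided (x*y) = two_sided f"
  shows "\<exists>\<epsilon>. \<epsilon>*\<epsilon> = \<epsilon> \<and> two_sided \<epsilon> = two_sided f"
proof -
  obtain w where w: "x = x*y*w" using stab_R[of x y] x xy by auto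
  hence "x = 1 * x * (y*w)" by (simp add: mult.assoc)
  hence xn: "x = x*(y*w)^n" for n using pow_sandwich[of x 1 "y*w" n] by simp
  obtain n where n: "n>0" "(y*w)^n * (y*w)^n = (y*w)^n" using idem_pow by blast
  obtain m where m: "n = Suc m" using n by (cases n) auto
  have "two_sided x \<subseteq> two_sided ((y*w)^n)" using xn[of n] by (metis ts_left)
  moreover have "two_sided ((y*w)^n) \<subseteq> two_sided y"
    using m ts_right[of y "w*(y*w)^m"] by (simp add: mult.assoc)
  ultimately show ?thesis using n x y by blast
qed


lemma core:
  fixes e f g h c m' :: "'m::{monoid_mult,finite}"
  assumes rect: "rectangular TYPE('m)" and e: "e*e = e"
    and g: "two_sided g \<subseteq> two_sided f" and h: "two_sided h \<subseteq> two_sided f"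
    and c: "two_sided c \<subseteq> two_sided f"
    and cs: "(c*e = c \<and> g = c*m') \<or> (e*c = c \<and> h = m'*c)"
    and big: "two_sided (g*e*h) = two_sided f \<or> two_sided (g*h) = two_sided f"
  shows "g*e*h = g*h"
proof -
  have s1: "two_sided (g*e*h) \<subseteq> two_sided (g*e)" "two_sided (g*e) \<subseteq> two_sided g"
    "two_sided (g*e*h) \<subseteq> two_sided h" "two_sided (g*h) \<subseteq> two_sided g"
    "two_sided (g*h) \<subseteq> two_sided h"
    by (auto intro: ts_right[THEN subsetD] ts_left[THEN subsetD])
  have Jg: "two_sided g = two_sided f" and Jh: "two_sided h = two_sided f"
    using big s1 g h by blast+
  obtain \<epsilon> where eps: "\<epsilon>*\<epsilon> = \<epsilon>" "two_sided \<epsilon> = two_sided f"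
  proof -
    { assume "two_sided (g*h) = two_sided f"
      hence ?thesis using reg_from_prod[OF Jg Jh] that by blast }
    moreover
    { assume a: "two_sided (g*e*h) = two_sided f"
      hence Jge: "two_sided (g*e) = two_sided f" using s1 Jg by blast
      hence ?thesis using reg_from_prod[OF Jge Jh] a that by blast }
    ultimately show ?thesis using big by blast
  qed
  have Jc: "two_sided c = two_sided f"
    using cs c Jg Jh ts_left[of m' c] ts_right[of c m'] by auto
  note Jg' = Jg[folded eps(2)] and Jh' = Jh[folded eps(2)] and Jc' = Jc[folded eps(2)]
  show ?thesis
  proof (cases "c*e = c \<and> g = c*m'")
    case True
    obtain w where w: "w*w = w" "two_sided w = two_sided \<epsilon>" "e*w = w"
      using w_exist_A[OF eps(1) Jc' e] True by blast
    have Jgw: "two_sided (g*w) = two_sided \<epsilon>" using close_r[OF rect eps(1) Jg' w(1,2)] .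
    have "g*w = (g*e)*w" using w(3) by (simp add: mult.assoc)
    hence "two_sided (g*w) \<subseteq> two_sided (g*e)" using ts_right[of "g*e" w] by simp
    hence Jge: "two_sided (g*e) = two_sided \<epsilon>" using Jgw s1 Jg' by blast
    have "g*e*h = (g*e)*w*h" using transp[OF rect eps(1) Jge Jh' w(1,2)] by simp
    also have "\<dots> = g*w*h" using w(3) by (simp add: mult.assoc)
    also have "\<dots> = g*h" using transp[OF rect eps(1) Jg' Jh' w(1,2)] .
    finally show ?thesis .
  next
    case False
    hence B: "e*c = c" "h = m'*c" using cs by auto
    obtain w where w: "w*w = w" "two_sided w = two_sided \<epsilon>" "w*e = w"
      using w_exist_B[OF eps(1) Jc' e] B by blast
    have Jwh: "two_sided (w*h) = two_sided \<epsilon>" using close_l[OF rect eps(1) Jh' w(1,2)] .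
    have "w*h = w*(e*h)" using w(3) by (simp flip: mult.assoc)
    hence "two_sided (w*h) \<subseteq> two_sided (e*h)" using ts_left[of w "e*h"] by simp
    moreover have "two_sided (e*h) \<subseteq> two_sided h" by (rule ts_left)
    ultimately have Jeh: "two_sided (e*h) = two_sided \<epsilon>" using Jwh Jh' by blast
    have "g*e*h = g*(e*h)" by (simp add: mult.assoc)
    also have "\<dots> = g*w*(e*h)" using transp[OF rect eps(1) Jg' Jeh w(1,2)] by simp
    also have "\<dots> = g*(w*e)*h" by (simp add: mult.assoc)
    also have "\<dots> = g*w*h" using w(3) by simp
    also have "\<dots> = g*h" using transp[OF rect eps(1) Jg' Jh' w(1,2)] .
    finally show ?thesis .
  qed
qed



lemma conv_alt:
  fixes f g :: "'m::{monoid_mult,finite} \<Rightarrow> 'k::field"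
  shows "conv f g m = (\<Sum>x\<in>UNIV. \<Sum>y\<in>UNIV. if x*y = m then f x * g y else 0)"
proof -
  have "conv f g m = (\<Sum>p\<in>{p\<in>UNIV. fst p * snd p = m}. f (fst p) * g (snd p))"
    by (simp add: conv_def)
  also have "\<dots> = (\<Sum>p\<in>UNIV. if fst p * snd p = m then f (fst p) * g (snd p) else 0)"
    by (rule sum.inter_filter) simp
  also have "\<dots> = (\<Sum>p\<in>UNIV \<times> UNIV. if fst p * snd p = m then f (fst p) * g (snd p) else 0)"
    by simp
  also have "\<dots> = (\<Sum>x\<in>UNIV. \<Sum>y\<in>UNIV. if x*y = m then f x * g y else 0)"
    by (subst sum.cartesian_product) (simp add: case_prod_beta)
  finally show ?thesis .
qed

lemma sum_if_eq: "(\<Sum>z\<in>UNIV. if z = a then F z else (0::'k::comm_monoid_add)) = F (a::'m::finite)"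
  by (simp add: sum.delta')

lemma ifsum: "(if P then sum F A else (0::'k::comm_monoid_add)) = (\<Sum>x\<in>A. if P then F x else 0)"
  by simp

lemma if_if0: "(if P then (if Q then a else 0) else (0::'k::zero)) = (if P \<and> Q then a else 0)"
  by simp

lemma if0_mult: "(if Q then a else 0) * (b::'k::semiring_0) = (if Q then a * b else 0)"
  by simp

lemma mult_if0: "(b::'k::semiring_0) * (if Q then a else 0) = (if Q then b * a else 0)"
  by simp

lemma perm4:
  fixes P :: "'a::finite \<Rightarrow> 'a \<Rightarrow> 'a \<Rightarrow> 'a \<Rightarrow> 'k::comm_monoid_add"
  shows "(\<Sum>z\<in>UNIV. \<Sum>w\<in>UNIV. \<Sum>x\<in>UNIV. \<Sum>y\<in>UNIV. P z w x y) =
         (\<Sum>w\<in>UNIV. \<Sum>x\<in>UNIV. \<Sum>y\<in>UNIV. \<Sum>z\<in>UNIV. P z w x y)"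
proof -
  have "(\<Sum>z\<in>UNIV. \<Sum>w\<in>UNIV. \<Sum>x\<in>UNIV. \<Sum>y\<in>UNIV. P z w x y) =
        (\<Sum>w\<in>UNIV. \<Sum>z\<in>UNIV. \<Sum>x\<in>UNIV. \<Sum>y\<in>UNIV. P z w x y)" by (rule sum.swap)
  also have "\<dots> = (\<Sum>w\<in>UNIV. \<Sum>x\<in>UNIV. \<Sum>z\<in>UNIV. \<Sum>y\<in>UNIV. P z w x y)"
    by (rule sum.cong[OF refl], rule sum.swap)
  also have "\<dots> = (\<Sum>w\<in>UNIV. \<Sum>x\<in>UNIV. \<Sum>y\<in>UNIV. \<Sum>z\<in>UNIV. P z w x y)"
    by (rule sum.cong[OF refl], rule sum.cong[OF refl], rule sum.swap)
  finally show ?thesis .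
qed

lemma perm4b:
  fixes P :: "'a::finite \<Rightarrow> 'a \<Rightarrow> 'a \<Rightarrow> 'a \<Rightarrow> 'k::comm_monoid_add"
  shows "(\<Sum>x\<in>UNIV. \<Sum>z\<in>UNIV. \<Sum>y\<in>UNIV. \<Sum>w\<in>UNIV. P x z y w) =
         (\<Sum>x\<in>UNIV. \<Sum>y\<in>UNIV. \<Sum>w\<in>UNIV. \<Sum>z\<in>UNIV. P x z y w)"
proof -
  have "(\<Sum>x\<in>UNIV. \<Sum>z\<in>UNIV. \<Sum>y\<in>UNIV. \<Sum>w\<in>UNIV. P x z y w) =
        (\<Sum>x\<in>UNIV. \<Sum>y\<in>UNIV. \<Sum>z\<in>UNIV. \<Sum>w\<in>UNIV. P x z y w)"
    by (rule sum.cong[OF refl], rule sum.swap)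
  also have "\<dots> = (\<Sum>x\<in>UNIV. \<Sum>y\<in>UNIV. \<Sum>w\<in>UNIV. \<Sum>z\<in>UNIV. P x z y w)"
    by (rule sum.cong[OF refl], rule sum.cong[OF refl], rule sum.swap)
  finally show ?thesis .
qed

lemma perm3:
  fixes P :: "'a::finite \<Rightarrow> 'a \<Rightarrow> 'a \<Rightarrow> 'k::comm_monoid_add"
  shows "(\<Sum>w\<in>UNIV. \<Sum>x\<in>UNIV. \<Sum>y\<in>UNIV. P w x y) =
         (\<Sum>x\<in>UNIV. \<Sum>y\<in>UNIV. \<Sum>w\<in>UNIV. P w x y)"
proof -
  have "(\<Sum>w\<in>UNIV. \<Sum>x\<in>UNIV. \<Sum>y\<in>UNIV. P w x y) = (\<Sum>x\<in>UNIV. \<Sum>w\<in>UNIV. \<Sum>y\<in>UNIV. P w x y)"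
    by (rule sum.swap)
  also have "\<dots> = (\<Sum>x\<in>UNIV. \<Sum>y\<in>UNIV. \<Sum>w\<in>UNIV. P w x y)"
    by (rule sum.cong[OF refl], rule sum.swap)
  finally show ?thesis .
qed

lemma collapse1: "(\<Sum>z\<in>UNIV. if Q z \<and> a = z then F z else (0::'k::comm_monoid_add)) = (if Q (a::'m::finite) then F a else 0)"
proof -
  have "(\<Sum>z\<in>UNIV. if Q z \<and> a = z then F z else (0::'k)) = (\<Sum>z\<in>UNIV. if a = z then (if Q z then F z else 0) else 0)"
    by (rule sum.cong) auto
  also have "\<dots> = (if Q a then F a else 0)" by (simp add: sum.delta')
  finally show ?thesis .
qed

lemma collapse2: "(\<Sum>z\<in>UNIV. if a = z \<and> Q z then F z else (0::'k::comm_monoid_add)) = (if Q (a::'m::finite) then F a else 0)"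
  using collapse1[of Q a F] by (simp add: conj_commute)

lemma conv_assoc:
  fixes f g h :: "'m::{monoid_mult,finite} \<Rightarrow> 'k::field"
  shows "conv (conv f g) h = conv f (conv g h)"
proof
  fix m
  have "conv (conv f g) h m =
     (\<Sum>z\<in>UNIV. \<Sum>w\<in>UNIV. \<Sum>x\<in>UNIV. \<Sum>y\<in>UNIV. if z*w = m \<and> x*y = z then f x * g y * h w else 0)"
    unfolding conv_alt[of "conv f g"] conv_alt[of f g]
    by (simp add: sum_distrib_right ifsum if_if0 if0_mult mult_if0 cong: if_cong)
  also have "\<dots> = (\<Sum>w\<in>UNIV. \<Sum>x\<in>UNIV. \<Sum>y\<in>UNIV. \<Sum>z\<in>UNIV. if z*w = m \<and> x*y = z then f x * g y * h w else 0)"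
    by (rule perm4)
  also have "\<dots> = (\<Sum>w\<in>UNIV. \<Sum>x\<in>UNIV. \<Sum>y\<in>UNIV. if x*y*w = m then f x * g y * h w else 0)"
    by (simp add: collapse1)
  also have "\<dots> = (\<Sum>x\<in>UNIV. \<Sum>y\<in>UNIV. \<Sum>w\<in>UNIV. if x*y*w = m then f x * g y * h w else 0)"
    by (rule perm3)
  also have "\<dots> = (\<Sum>x\<in>UNIV. \<Sum>y\<in>UNIV. \<Sum>w\<in>UNIV. \<Sum>z\<in>UNIV. if x*z = m \<and> y*w = z then f x * g y * h w else 0)"
    by (simp add: collapse1 mult.assoc)
  also have "\<dots> = (\<Sum>x\<in>UNIV. \<Sum>z\<in>UNIV. \<Sum>y\<in>UNIV. \<Sum>w\<in>UNIV. if x*z = m \<and> y*w = z then f x * g y * h w else 0)"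
    by (rule perm4b[symmetric])
  also have "\<dots> = conv f (conv g h) m"
    unfolding conv_alt[of f "conv g h"] conv_alt[of g h]
    by (simp add: sum_distrib_left ifsum if_if0 if0_mult mult_if0 mult.assoc cong: if_cong)
  finally show "conv (conv f g) h m = conv f (conv g h) m" .
qed



lemma conv_lin_right:
  fixes A :: "'m::{monoid_mult,finite} \<Rightarrow> 'k::field"
  shows "conv A (\<lambda>x. \<Sum>u\<in>U. k u * F u x) = (\<lambda>m. \<Sum>u\<in>U. k u * conv A (F u) m)"
  unfolding conv_def by (rule ext) (simp add: sum_distrib_left mult_ac sum.swap[of _ U])

lemma conv_lin_left:
  fixes B :: "'m::{monoid_mult,finite} \<Rightarrow> 'k::field"
  shows "conv (\<lambda>x. \<Sum>u\<in>U. k u * F u x) B = (\<lambda>m. \<Sum>u\<in>U. k u * conv (F u) B m)"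
  unfolding conv_def by (rule ext) (simp add: sum_distrib_left sum_distrib_right mult_ac sum.swap[of _ U])

lemma decomp: "(d::'m::finite \<Rightarrow> 'k::field) = (\<lambda>x. \<Sum>u\<in>UNIV. d u * delta u x)"
  by (rule ext) (simp add: delta_def mult_if0 sum.delta)

lemma conv_add_left:
  fixes f g h :: "'m::{monoid_mult,finite} \<Rightarrow> 'k::field"
  shows "conv (\<lambda>x. f x + g x) h = (\<lambda>m. conv f h m + conv g h m)"
  unfolding conv_def by (simp add: distrib_right sum.distrib)

lemma conv_add_right:
  fixes f g h :: "'m::{monoid_mult,finite} \<Rightarrow> 'k::field"
  shows "conv h (\<lambda>x. f x + g x) = (\<lambda>m. conv h f m + conv h g m)"
  unfolding conv_def by (simp add: distrib_left sum.distrib)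

lemma conv_diff_left:
  fixes f g h :: "'m::{monoid_mult,finite} \<Rightarrow> 'k::field"
  shows "conv (\<lambda>x. f x - g x) h = (\<lambda>m. conv f h m - conv g h m)"
  unfolding conv_def by (simp add: left_diff_distrib sum_subtractf)

lemma conv_diff_right:
  fixes f g h :: "'m::{monoid_mult,finite} \<Rightarrow> 'k::field"
  shows "conv h (\<lambda>x. f x - g x) = (\<lambda>m. conv h f m - conv h g m)"
  unfolding conv_def by (simp add: right_diff_distrib sum_subtractf)

lemma conv_neg_left:
  fixes f h :: "'m::{monoid_mult,finite} \<Rightarrow> 'k::field"
  shows "conv (\<lambda>x. - f x) h = (\<lambda>m. - conv f h m)"
  unfolding conv_def by (simp add: sum_negf)

lemma conv_zero_left:
  fixes h :: "'m::{monoid_mult,finite} \<Rightarrow> 'k::field"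
  shows "conv (\<lambda>x. 0) h = (\<lambda>m. 0)"
  unfolding conv_def by simp

lemma delta_apply: "delta m x = (if x = m then 1 else 0)"
  by (simp add: delta_def)

lemma conv_one_left:
  fixes h :: "'m::{monoid_mult,finite} \<Rightarrow> 'k::field"
  shows "conv (delta 1) h = h"
proof
  fix m
  have "conv (delta 1) h m = (\<Sum>x\<in>UNIV. if x = 1 then (\<Sum>y\<in>UNIV. if x*y = m then h y else 0) else 0)"
    unfolding conv_alt by (rule sum.cong) (auto simp: delta_apply cong: if_cong)
  also have "\<dots> = h m" by (simp add: sum.delta)
  finally show "conv (delta 1) h m = h m" .
qed

lemma conv_one_right:
  fixes h :: "'m::{monoid_mult,finite} \<Rightarrow> 'k::field"
  shows "conv h (delta 1) = h"
proof
  fix m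
  have "conv h (delta 1) m = (\<Sum>y\<in>UNIV. \<Sum>x\<in>UNIV. if x*y = m then h x * delta 1 y else 0)"
    unfolding conv_alt by (rule sum.swap)
  also have "\<dots> = (\<Sum>y\<in>UNIV. if y = 1 then (\<Sum>x\<in>UNIV. if x*y = m then h x else 0) else 0)"
    by (rule sum.cong) (auto simp: delta_apply cong: if_cong)
  also have "\<dots> = h m" by (simp add: sum.delta)
  finally show "conv h (delta 1) m = h m" .
qed

lemma conv_delta_delta:
  "conv (delta a) (delta b) = (delta (a*b) :: 'm::{monoid_mult,finite} \<Rightarrow> 'k::field)"
proof
  fix m
  have "conv (delta a) (delta b) m = (\<Sum>x\<in>UNIV. if x = a then (\<Sum>y\<in>UNIV. if x*y = m then (if y = b then 1 else 0) else 0) else (0::'k))"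
    unfolding conv_alt by (rule sum.cong) (auto simp: delta_apply cong: if_cong)
  also have "\<dots> = (\<Sum>y\<in>UNIV. if a*y = m then (if y = b then 1 else 0) else (0::'k))"
    by (simp add: sum.delta)
  also have "\<dots> = (\<Sum>y\<in>UNIV. if y = b then (if a*y = m then 1 else 0) else (0::'k))"
    by (rule sum.cong) auto
  also have "\<dots> = delta (a*b) m" by (simp add: sum.delta delta_apply eq_commute)
  finally show "conv (delta a) (delta b) m = (delta (a*b) m :: 'k)" .
qed

lemma conv_delta_delta2:
  fixes W :: "'m::{monoid_mult,finite} \<Rightarrow> 'k::field"
  shows "conv (delta a) (conv (delta b) W) = conv (delta (a*b)) W"
  by (simp add: conv_assoc[symmetric] conv_delta_delta)

lemma conv_scal:
  fixes x :: "'m::{monoid_mult,finite} \<Rightarrow> 'k::field"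
  shows "conv (\<lambda>u. k * delta 1 u) x = (\<lambda>t. k * x t)"
proof -
  have "conv (\<lambda>u. k * delta 1 u) x = conv (\<lambda>u. \<Sum>v\<in>{()}. k * delta 1 u) x" by simp
  also have "\<dots> = (\<lambda>t. k * x t)" by (subst conv_lin_left) (simp add: conv_one_left)
  finally show ?thesis .
qed


lemma expand:
  fixes A d V :: "'m::{monoid_mult,finite} \<Rightarrow> 'k::field"
  shows "conv A (conv d V) = (\<lambda>m. \<Sum>u\<in>UNIV. d u * conv A (conv (delta u) V) m)"
proof -
  have e: "(\<lambda>x. \<Sum>u\<in>UNIV. d u * delta u x) = d" by (rule decomp[symmetric])
  have "conv d V = conv (\<lambda>x. \<Sum>u\<in>UNIV. d u * delta u x) V" by (simp only: e)
  also have "\<dots> = (\<lambda>m. \<Sum>u\<in>UNIV. d u * conv (delta u) V m)" by (rule conv_lin_left)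
  finally have "conv A (conv d V) = conv A (\<lambda>m. \<Sum>u\<in>UNIV. d u * conv (delta u) V m)" by simp
  also have "\<dots> = (\<lambda>m. \<Sum>u\<in>UNIV. d u * conv A (conv (delta u) V) m)" by (rule conv_lin_right)
  finally show ?thesis .
qed

lemma li_zero: "left_ideal I \<Longrightarrow> (\<lambda>_. 0) \<in> I"
  by (simp add: left_ideal_def)
lemma li_add: "left_ideal I \<Longrightarrow> x \<in> I \<Longrightarrow> y \<in> I \<Longrightarrow> (\<lambda>t. x t + y t) \<in> I"
  by (simp add: left_ideal_def)
lemma li_neg: "left_ideal I \<Longrightarrow> x \<in> I \<Longrightarrow> (\<lambda>t. - x t) \<in> I"
  by (simp add: left_ideal_def)
lemma li_conv: "left_ideal I \<Longrightarrow> x \<in> I \<Longrightarrow> conv a x \<in> I"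
  by (simp add: left_ideal_def)
lemma li_diff: "left_ideal I \<Longrightarrow> x \<in> I \<Longrightarrow> y \<in> I \<Longrightarrow> (\<lambda>t. x t - y t) \<in> I"
  using li_add[of I x "\<lambda>t. - y t"] li_neg[of I y] by simp

lemma li_scal:
  fixes I :: "('m::{monoid_mult,finite} \<Rightarrow> 'k::field) set"
  shows "left_ideal I \<Longrightarrow> x \<in> I \<Longrightarrow> (\<lambda>t. k * x t) \<in> I"
  using li_conv[of I x "\<lambda>u. k * delta 1 u"] conv_scal[of k x] by simp

lemma li_sum:
  fixes I :: "('m::{monoid_mult,finite} \<Rightarrow> 'k::field) set"
  assumes "left_ideal I" "finite U" "\<And>u. u \<in> U \<Longrightarrow> F u \<in> I"
  shows "(\<lambda>t. \<Sum>u\<in>U. F u t) \<in> I"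
  using assms(2,3)
proof (induction U rule: finite_induct)
  case empty then show ?case using li_zero[OF assms(1)] by simp
next
  case (insert x U)
  have "(\<lambda>t. F x t + (\<Sum>u\<in>U. F u t)) \<in> I"
    using insert li_add[OF assms(1)] by auto
  thus ?case using insert by simp
qed

lemma li_wsum:
  fixes I :: "('m::{monoid_mult,finite} \<Rightarrow> 'k::field) set" and F :: "'m \<Rightarrow> 'm \<Rightarrow> 'k"
  assumes "left_ideal I" "\<And>u. F u \<in> I"
  shows "(\<lambda>t. \<Sum>u\<in>UNIV. k u * F u t) \<in> I"
  using li_sum[OF assms(1), of UNIV "\<lambda>u t. k u * F u t"] li_scal[OF assms(1) assms(2)] by simp

lemma max_gen:
  fixes I :: "('m::{monoid_mult,finite} \<Rightarrow> 'k::field) set"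
  assumes max: "maximal_left_ideal I" and v: "v \<notin> I"
  shows "\<exists>c i. i \<in> I \<and> t = (\<lambda>x. conv c v x + i x)"
proof -
  have li: "left_ideal I" using max by (simp add: maximal_left_ideal_def)
  define L where "L = {t. \<exists>c i. i \<in> I \<and> t = (\<lambda>x. conv c v x + i x)}"
  have "left_ideal L"
    unfolding left_ideal_def
  proof (intro conjI ballI allI)
    show "(\<lambda>_. 0) \<in> L" unfolding L_def
      by (intro CollectI exI[of _ "\<lambda>_. 0"]) (simp add: li_zero[OF li] conv_zero_left)
  next
    fix x y assume "x \<in> L" "y \<in> L"
    then obtain c1 i1 c2 i2 where "i1 \<in> I" "x = (\<lambda>t. conv c1 v t + i1 t)"
      "i2 \<in> I" "y = (\<lambda>t. conv c2 v t + i2 t)" unfolding L_def by blast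
    thus "(\<lambda>t. x t + y t) \<in> L" unfolding L_def
      by (intro CollectI exI[of _ "\<lambda>t. c1 t + c2 t"] exI[of _ "\<lambda>t. i1 t + i2 t"])
         (auto simp: conv_add_left li_add[OF li])
  next
    fix x assume "x \<in> L"
    then obtain c1 i1 where "i1 \<in> I" "x = (\<lambda>t. conv c1 v t + i1 t)" unfolding L_def by blast
    thus "(\<lambda>t. - x t) \<in> L" unfolding L_def
      by (intro CollectI exI[of _ "\<lambda>t. - c1 t"] exI[of _ "\<lambda>t. - i1 t"])
         (auto simp: conv_neg_left li_neg[OF li])
  next
    fix a x assume "x \<in> L"
    then obtain c1 i1 where "i1 \<in> I" "x = (\<lambda>t. conv c1 v t + i1 t)" unfolding L_def by blast
    thus "conv a x \<in> L" unfolding L_def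
      by (intro CollectI exI[of _ "conv a c1"] exI[of _ "conv a i1"])
         (auto simp: conv_add_right conv_assoc li_conv[OF li])
  qed
  moreover have "I \<subseteq> L"
  proof
    fix t assume "t \<in> I"
    thus "t \<in> L" unfolding L_def
      by (intro CollectI exI[of _ "\<lambda>_. 0"] exI[of _ t]) (simp add: conv_zero_left)
  qed
  moreover have "v \<in> L" unfolding L_def
    using li_zero[OF li] by (intro CollectI exI[of _ "delta 1"] exI[of _ "\<lambda>_. 0"]) (simp add: conv_one_left)
  ultimately have "L = UNIV" using max v unfolding maximal_left_ideal_def by blast
  thus ?thesis unfolding L_def by blast
qed



definition ann :: "('m::{monoid_mult,finite} \<Rightarrow> 'k::field) set \<Rightarrow> 'm \<Rightarrow> bool" where
  "ann I x \<longleftrightarrow> (\<forall>r. conv (delta x) r \<in> I)"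

lemma annih:
  fixes I :: "('m::{monoid_mult,finite} \<Rightarrow> 'k::field) set" and a b :: 'm
  assumes max: "maximal_left_ideal I"
    and H: "\<And>f s t. \<not> ann I f \<Longrightarrow> (\<forall>y. two_sided y \<subset> two_sided f \<longrightarrow> ann I y) \<Longrightarrow>
        (ann I (f*s*a*t*f) \<and> ann I (f*s*b*t*f)) \<or> f*s*a*t*f = f*s*b*t*f"
  shows "(\<lambda>x. delta a x - delta b x) \<in> I"
proof -
  have li: "left_ideal I" and nU: "I \<noteq> UNIV" using max by (auto simp: maximal_left_ideal_def)
  have n1: "\<not> ann I 1"
  proof
    assume "ann I 1"
    hence "r \<in> I" for r using conv_one_left[of r] unfolding ann_def by metis
    thus False using nU by blast
  qed
  obtain f where f: "\<not> ann I f" "\<And>y. \<not> ann I y \<Longrightarrow> card (two_sided f) \<le> card (two_sided y)"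
    using ex_has_least_nat[of "\<lambda>x. \<not> ann I x" 1 "\<lambda>x. card (two_sided x)"] n1 by blast
  have apex: "\<forall>y. two_sided y \<subset> two_sided f \<longrightarrow> ann I y"
  proof (intro allI impI)
    fix y assume "two_sided y \<subset> two_sided f"
    hence "card (two_sided y) < card (two_sided f)" by (intro psubset_card_mono) auto
    thus "ann I y" using f(2)[of y] by linarith
  qed
  obtain r0 where r0: "conv (delta f) r0 \<notin> I" using f(1) unfolding ann_def by blast
  define V where "V = conv (delta f) r0"
  obtain c i where ci: "i \<in> I" "delta 1 = (\<lambda>x. conv c V x + i x)"
    using max_gen[OF max r0[folded V_def]] by blast
  have A: "(\<lambda>m. conv (delta p) W m - conv (delta q) W m) \<in> I"
    if pq: "\<And>u. (ann I (p*u*f) \<and> ann I (q*u*f)) \<or> p*u*f = q*u*f" for p q W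
  proof -
    define d where "d = conv W c"
    have W: "W = (\<lambda>x. conv d V x + conv W i x)"
    proof -
      have "W = conv W (delta 1)" by (simp add: conv_one_right)
      also have "\<dots> = (\<lambda>x. conv d V x + conv W i x)"
        by (subst ci(2)) (simp add: conv_add_right conv_assoc d_def)
      finally show ?thesis .
    qed
    have eq: "conv (delta z) W = (\<lambda>m. (\<Sum>u\<in>UNIV. d u * conv (delta (z*u*f)) r0 m) + conv (conv (delta z) W) i m)"
      for z
    proof -
      have "conv (delta z) W = (\<lambda>m. conv (delta z) (conv d V) m + conv (delta z) (conv W i) m)"
        by (subst W) (simp add: conv_add_right)
      also have "conv (delta z) (conv d V) = (\<lambda>m. \<Sum>u\<in>UNIV. d u * conv (delta (z*u*f)) r0 m)"
        by (subst expand) (simp add: V_def conv_delta_delta2 mult.assoc)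
      finally have X: "conv (delta z) W = (\<lambda>m. (\<Sum>u\<in>UNIV. d u * conv (delta (z*u*f)) r0 m) + conv (delta z) (conv W i) m)" .
      show ?thesis by (subst conv_assoc) (rule X)
    qed
    have t1: "(\<lambda>m. \<Sum>u\<in>UNIV. d u * (conv (delta (p*u*f)) r0 m - conv (delta (q*u*f)) r0 m)) \<in> I"
    proof (rule li_wsum[OF li])
      fix u
      show "(\<lambda>m. conv (delta (p*u*f)) r0 m - conv (delta (q*u*f)) r0 m) \<in> I"
        using pq[of u]
      proof
        assume "ann I (p*u*f) \<and> ann I (q*u*f)"
        thus ?thesis unfolding ann_def by (intro li_diff[OF li]) auto
      next
        assume "p*u*f = q*u*f"
        thus ?thesis using li_zero[OF li] by simp
      qed
    qed
    have t2: "(\<lambda>m. conv (conv (delta p) W) i m - conv (conv (delta q) W) i m) \<in> I"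
      using ci(1) by (intro li_diff[OF li] li_conv[OF li])
    have "(\<lambda>m. conv (delta p) W m - conv (delta q) W m) =
      (\<lambda>m. (\<Sum>u\<in>UNIV. d u * (conv (delta (p*u*f)) r0 m - conv (delta (q*u*f)) r0 m)) +
           (conv (conv (delta p) W) i m - conv (conv (delta q) W) i m))"
      by (subst (1 2) eq) (simp add: right_diff_distrib sum_subtractf algebra_simps)
    thus ?thesis using li_add[OF li t1 t2] by simp
  qed
  define Y where "Y = (\<lambda>x. delta a x - delta b x :: 'k)"
  have B: "conv Y r \<in> I" for r
  proof (rule ccontr)
    assume nI: "conv Y r \<notin> I"
    obtain c2 i2 where ci2: "i2 \<in> I" "r0 = (\<lambda>x. conv c2 (conv Y r) x + i2 x)"
      using max_gen[OF max nI] by blast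
    have "conv (delta f) r0 = (\<lambda>m. conv (delta f) (conv c2 (conv Y r)) m + conv (delta f) i2 m)"
      by (subst ci2(2)) (simp add: conv_add_right)
    also have "conv (delta f) (conv c2 (conv Y r)) =
        (\<lambda>m. \<Sum>u\<in>UNIV. c2 u * (conv (delta (f*u*a)) r m - conv (delta (f*u*b)) r m))"
    proof -
      have "conv (delta f) (conv (delta u) (conv Y r)) = (\<lambda>m. conv (delta (f*u*a)) r m - conv (delta (f*u*b)) r m)" for u
      proof -
        have "conv (delta f) (conv (delta u) (conv Y r)) = conv (conv (delta (f*u)) Y) r"
          by (simp add: conv_delta_delta2 conv_assoc)
        also have "conv (delta (f*u)) Y = (\<lambda>x. delta (f*u*a) x - delta (f*u*b) x)"
          unfolding Y_def by (simp add: conv_diff_right conv_delta_delta)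
        finally show ?thesis by (simp add: conv_diff_left)
      qed
      thus ?thesis by (subst expand) simp
    qed
    finally have eq: "conv (delta f) r0 = (\<lambda>m. (\<Sum>u\<in>UNIV. c2 u * (conv (delta (f*u*a)) r m - conv (delta (f*u*b)) r m)) + conv (delta f) i2 m)" .
    have "(\<lambda>m. \<Sum>u\<in>UNIV. c2 u * (conv (delta (f*u*a)) r m - conv (delta (f*u*b)) r m)) \<in> I"
    proof (rule li_wsum[OF li])
      fix u
      show "(\<lambda>m. conv (delta (f*u*a)) r m - conv (delta (f*u*b)) r m) \<in> I"
        by (rule A) (use H[OF f(1) apex] in \<open>simp add: mult.assoc\<close>)
    qed
    hence "conv (delta f) r0 \<in> I" unfolding eq
      using li_add[OF li _ li_conv[OF li ci2(1)]] by blast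
    thus False using r0 by blast
  qed
  have "Y = conv Y (delta 1)" by (simp add: conv_one_right)
  thus ?thesis using B[of "delta 1"] unfolding Y_def by simp
qed



lemma H_gen:
  fixes I :: "('m::{monoid_mult,finite} \<Rightarrow> 'k::field) set" and e f g h c m' :: 'm
  assumes rect: "rectangular TYPE('m)" and e: "e*e = e"
    and apex: "\<forall>y. two_sided y \<subset> two_sided f \<longrightarrow> ann I y"
    and g: "two_sided g \<subseteq> two_sided f" and h: "two_sided h \<subseteq> two_sided f"
    and c: "two_sided c \<subseteq> two_sided f"
    and cs: "(c*e = c \<and> g = c*m') \<or> (e*c = c \<and> h = m'*c)"
  shows "(ann I (g*e*h) \<and> ann I (g*h)) \<or> g*e*h = g*h"
proof (cases "two_sided (g*e*h) = two_sided f \<or> two_sided (g*h) = two_sided f")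
  case True
  thus ?thesis using core[OF rect e g h c cs] by blast
next
  case False
  have "two_sided (g*e*h) \<subseteq> two_sided f" "two_sided (g*h) \<subseteq> two_sided f"
    using h ts_left[of "g*e" h] ts_left[of g h] by auto
  thus ?thesis using False apex by blast
qed

lemma rect_main:
  fixes e m n :: "'m::{monoid_mult,finite}"
  assumes rect: "rectangular TYPE('m)" and e: "e \<in> idempotents"
  shows "(e*m*e*n*e, e*m*n*e) \<in> rad2 TYPE('k::field)"
proof -
  have ee: "e*e = e" using e by (simp add: idempotents_def)
  have ee2: "e*(e*x) = e*x" for x using ee by (simp flip: mult.assoc)
  define Y1 where "Y1 = (\<lambda>x. delta (e*m*e) x - delta (e*m) x :: 'k)"
  define Y2 where "Y2 = (\<lambda>x. delta (n*e) x - delta (e*n*e) x :: 'k)"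
  have Y1: "Y1 \<in> jrad"
    unfolding jrad_def
  proof (intro InterI, clarify)
    fix I :: "('m \<Rightarrow> 'k) set" assume max: "maximal_left_ideal I"
    show "Y1 \<in> I" unfolding Y1_def
    proof (rule annih[OF max])
      fix f s t assume nf: "\<not> ann I f" and apex: "\<forall>y. two_sided y \<subset> two_sided f \<longrightarrow> ann I y"
      have 1: "f*s*(e*m*e)*t*f = (f*s*e*m)*e*(t*f)" "f*s*(e*m)*t*f = (f*s*e*m)*(t*f)"
        by (simp_all add: mult.assoc)
      have "(ann I ((f*s*e*m)*e*(t*f)) \<and> ann I ((f*s*e*m)*(t*f))) \<or> (f*s*e*m)*e*(t*f) = (f*s*e*m)*(t*f)"
      proof (rule H_gen[OF rect ee apex, of _ _ "f*s*e" m])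
        have "f*s*e*m = 1*f*(s*e*m)" by (simp add: mult.assoc)
        thus "two_sided (f*s*e*m) \<subseteq> two_sided f" using ts_trans ts_mem by metis
        show "two_sided (t*f) \<subseteq> two_sided f" by (rule ts_left)
        have "f*s*e = 1*f*(s*e)" by (simp add: mult.assoc)
        thus "two_sided (f*s*e) \<subseteq> two_sided f" using ts_trans ts_mem by metis
        show "(f*s*e*e = f*s*e \<and> f*s*e*m = f*s*e*m) \<or> (e*(f*s*e) = f*s*e \<and> t*f = m*(f*s*e))"
          using ee by (simp add: mult.assoc)
      qed
      thus "(ann I (f*s*(e*m*e)*t*f) \<and> ann I (f*s*(e*m)*t*f)) \<or> f*s*(e*m*e)*t*f = f*s*(e*m)*t*f"
        unfolding 1 .
    qed
  qed
  have Y2: "Y2 \<in> jrad"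
    unfolding jrad_def
  proof (intro InterI, clarify)
    fix I :: "('m \<Rightarrow> 'k) set" assume max: "maximal_left_ideal I"
    show "Y2 \<in> I" unfolding Y2_def
    proof (rule annih[OF max])
      fix f s t assume nf: "\<not> ann I f" and apex: "\<forall>y. two_sided y \<subset> two_sided f \<longrightarrow> ann I y"
      have 1: "f*s*(e*n*e)*t*f = (f*s)*e*(n*(e*t*f))" "f*s*(n*e)*t*f = (f*s)*(n*(e*t*f))"
        using ee by (simp_all add: mult.assoc ee2)
      have "(ann I ((f*s)*e*(n*(e*t*f))) \<and> ann I ((f*s)*(n*(e*t*f)))) \<or> (f*s)*e*(n*(e*t*f)) = (f*s)*(n*(e*t*f))"
      proof (rule H_gen[OF rect ee apex, of _ _ "e*t*f" n])
        show "two_sided (f*s) \<subseteq> two_sided f" by (rule ts_right)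
        have "n*(e*t*f) = (n*e*t)*f*1" by (simp add: mult.assoc)
        thus "two_sided (n*(e*t*f)) \<subseteq> two_sided f" using ts_trans ts_mem by metis
        show "two_sided (e*t*f) \<subseteq> two_sided f" by (rule ts_left)
        show "(e*t*f*e = e*t*f \<and> f*s = e*t*f*n) \<or> (e*(e*t*f) = e*t*f \<and> n*(e*t*f) = n*(e*t*f))"
          using ee by (simp add: mult.assoc ee2)
      qed
      thus "(ann I (f*s*(n*e)*t*f) \<and> ann I (f*s*(e*n*e)*t*f)) \<or> f*s*(n*e)*t*f = f*s*(e*n*e)*t*f"
        unfolding 1 by auto
    qed
  qed
  have "conv Y1 Y2 = (\<lambda>t. delta (e*m*e*n*e) t - delta (e*m*n*e) t)"
  proof -
    have "conv Y1 Y2 = (\<lambda>t. (delta ((e*m*e)*(n*e)) t - delta ((e*m*e)*(e*n*e)) t)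
                         - (delta ((e*m)*(n*e)) t - delta ((e*m)*(e*n*e)) t))"
      unfolding Y1_def Y2_def by (simp add: conv_diff_left conv_diff_right conv_delta_delta)
    also have "\<dots> = (\<lambda>t. delta (e*m*e*n*e) t - delta (e*m*n*e) t)"
      by (simp add: mult.assoc ee2)
    finally show ?thesis .
  qed
  hence "(\<lambda>t. delta (e*m*e*n*e) t - delta (e*m*n*e) t :: 'k) \<in> rad_sq"
    using rad_sq.prod[OF Y1 Y2] by simp
  thus ?thesis unfolding rad2_def by simp
qed

lemma band_rect:
  assumes "band TYPE('b::monoid_mult)" shows "rectangular TYPE('b)"
proof -
  have id: "x*x = x" for x :: 'b using assms by (simp add: band_def)
  have key: "f \<in> two_sided (f*g)" if "two_sided f = two_sided g" for f g :: 'b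
  proof -
    have "f \<in> two_sided g" using that ts_mem[of 1 f 1] by simp
    then obtain a b where ab: "f = a*g*b" by (auto simp: two_sided_def)
    define P where "P = f*a*g"
    define Q where "Q = g*b*f"
    have PQ: "P*Q = f"
    proof -
      have "P*Q = f*a*(g*g)*b*f" by (simp add: P_def Q_def mult.assoc)
      also have "\<dots> = f*(a*g*b)*f" using id by (simp add: mult.assoc)
      also have "\<dots> = f" using ab id by simp
      finally show ?thesis .
    qed
    have "f*Q*P*f = (P*Q)*Q*P*(P*Q)" using PQ by simp
    also have "\<dots> = P*(Q*Q)*(P*P)*Q" by (simp add: mult.assoc)
    also have "\<dots> = P*Q*P*Q" by (simp only: id)
    also have "\<dots> = (P*Q)*(P*Q)" by (simp only: mult.assoc)
    also have "\<dots> = f" using PQ id by simp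
    moreover have id2: "x*(x*y) = x*y" for x y :: 'b by (metis id mult.assoc)
    ultimately have "f = 1*(f*g)*(b*f*a*g*f)" by (simp add: P_def Q_def mult.assoc id2)
    thus ?thesis using ts_mem by metis
  qed
  show ?thesis unfolding rectangular_def idempotents_def
  proof (intro ballI impI conjI)
    fix e f g :: 'b
    assume fg: "two_sided f = two_sided e \<and> two_sided g = two_sided e"
    show "f*g \<in> {e. e*e = e}" using id by simp
    have "two_sided (f*g) \<subseteq> two_sided f" by (rule ts_right)
    moreover have "two_sided f \<subseteq> two_sided (f*g)" using key[of f g] fg ts_trans by auto
    ultimately show "two_sided (f*g) = two_sided e" using fg by blast
  qed
qed

theorem mainTheorem13:
  fixes e m n :: "'m::{monoid_mult, finite}"
  assumes "rectangular TYPE('m)"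
    and "e \<in> idempotents"
  shows "(e * m * e * n * e, e * m * n * e) \<in> rad2 TYPE('k::field) \<and>
         (band TYPE('b::{monoid_mult, finite}) \<longrightarrow>
          (\<forall>x :: 'b. (x * x, x) \<in> rad2 TYPE('k)) \<and>
          (\<forall>x y z :: 'b. (x * y * x * z * x, x * y * z * x) \<in> rad2 TYPE('k)))"
proof (intro conjI impI allI)
  show "(e * m * e * n * e, e * m * n * e) \<in> rad2 TYPE('k::field)"
    by (rule rect_main[OF assms])
next
  fix x :: 'b assume b: "band TYPE('b)"
  have "x*x = x" using b by (simp add: band_def)
  moreover have "(\<lambda>t. delta x t - delta x t :: 'k) \<in> rad_sq" using rad_sq.zero by simp
  ultimately show "(x * x, x) \<in> rad2 TYPE('k)" unfolding rad2_def by simp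
next
  fix x y z :: 'b assume b: "band TYPE('b)"
  have "x \<in> idempotents" using b by (simp add: band_def idempotents_def)
  thus "(x * y * x * z * x, x * y * z * x) \<in> rad2 TYPE('k)"
    by (rule rect_main[OF band_rect[OF b]])
qed


end
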